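(* Let $(\mathbf{X},\mathbf{p})$ be a $\{1,k\}$-payment equilibrium. If some agent $i$ is pEF1 towards another agent $j$ but is not $(2-1/k)$-pEFX towards $j$, then $p(X_j)<k$.
   Context: Fix $k>1$. Agents $N$, chores $M$, additive costs $c_i(e)\in\{1,k\}$. An allocation $\mathbf{X}$ partitions $M$ into bundles $X_i$. A payment vector assigns $p(e)>0$, $p(X)=\sum_{e\in X}p(e)$; $\alpha_{i,e}=c_i(e)/p(e)$, $\alpha_i=\min_e\alpha_{i,e}$, $\mathsf{MPB}_i=\{e:\alpha_{i,e}=\alpha_i\}$; $(\mathbf{X},\mathbf{p})$ is a $\{1,k\}$-payment equilibrium if $X_i\subseteq\mathsf{MPB}_i$ for all $i$ and $p(e)\in\{1,k\}$ for all $e$. Agent $i$ is pEF1 towards $j$ if $X_i=\emptyset$ or there is $e\in X_i$ with $p(X_i\setminus\{e\})\le p(X_j)$; $i$ is $\beta$-pEFX towards $j$ if $X_i=\emptyset$ or $p(X_i\setminus\{e\})\le\beta\,p(X_j)$ for all $e\in X_i$. *)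

theory Defs
  imports Main "HOL.Real"
begin

definition is_allocation :: "'a set \<Rightarrow> 'b set \<Rightarrow> ('a \<Rightarrow> 'b set) \<Rightarrow> bool" where
  "is_allocation N M X \<longleftrightarrow>
     (\<forall>i\<in>N. X i \<subseteq> M) \<and>
     (\<forall>i\<in>N. \<forall>j\<in>N. i \<noteq> j \<longrightarrow> X i \<inter> X j = {}) \<and>
     (\<Union>i\<in>N. X i) = M"

definition pay :: "('b \<Rightarrow> real) \<Rightarrow> 'b set \<Rightarrow> real" where
  "pay p S = (\<Sum>e\<in>S. p e)"

definition mpb_ratio :: "('a \<Rightarrow> 'b \<Rightarrow> real) \<Rightarrow> ('b \<Rightarrow> real) \<Rightarrow> 'a \<Rightarrow> 'b \<Rightarrow> real" where
  "mpb_ratio c p i e = c i e / p e"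

definition MPB :: "'b set \<Rightarrow> ('a \<Rightarrow> 'b \<Rightarrow> real) \<Rightarrow> ('b \<Rightarrow> real) \<Rightarrow> 'a \<Rightarrow> 'b set" where
  "MPB M c p i = {e\<in>M. \<forall>e'\<in>M. mpb_ratio c p i e \<le> mpb_ratio c p i e'}"

definition payment_equilibrium_1k ::
  "real \<Rightarrow> 'a set \<Rightarrow> 'b set \<Rightarrow> ('a \<Rightarrow> 'b \<Rightarrow> real) \<Rightarrow> ('a \<Rightarrow> 'b set) \<Rightarrow> ('b \<Rightarrow> real) \<Rightarrow> bool" where
  "payment_equilibrium_1k k N M c X p \<longleftrightarrow>
     is_allocation N M X \<and>
     (\<forall>i\<in>N. X i \<subseteq> MPB M c p i) \<and>
     (\<forall>e\<in>M. p e \<in> {1, k})"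

definition pEF1 :: "('a \<Rightarrow> 'b set) \<Rightarrow> ('b \<Rightarrow> real) \<Rightarrow> 'a \<Rightarrow> 'a \<Rightarrow> bool" where
  "pEF1 X p i j \<longleftrightarrow> X i = {} \<or> (\<exists>e\<in>X i. pay p (X i - {e}) \<le> pay p (X j))"

definition pEFX :: "real \<Rightarrow> ('a \<Rightarrow> 'b set) \<Rightarrow> ('b \<Rightarrow> real) \<Rightarrow> 'a \<Rightarrow> 'a \<Rightarrow> bool" where
  "pEFX \<beta> X p i j \<longleftrightarrow> X i = {} \<or> (\<forall>e\<in>X i. pay p (X i - {e}) \<le> \<beta> * pay p (X j))"

end

theory Submission
  imports Defs
begin

theorem lemma7:
  fixes k :: real and N :: "'a set" and M :: "'b set"
    and c :: "'a \<Rightarrow> 'b \<Rightarrow> real" and X :: "'a \<Rightarrow> 'b set" and p :: "'b \<Rightarrow> real"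
    and i j :: 'a
  assumes "k > 1"
    and "finite N" and "finite M"
    and "\<forall>a\<in>N. \<forall>e\<in>M. c a e \<in> {1, k}"
    and "payment_equilibrium_1k k N M c X p"
    and "i \<in> N" and "j \<in> N" and "i \<noteq> j"
    and "pEF1 X p i j"
    and "\<not> pEFX (2 - 1 / k) X p i j"
  shows "pay p (X j) < k"
proof (rule ccontr)
  assume H: "\<not> pay p (X j) < k"
  have sub: "X i \<subseteq> M" and pv: "\<forall>e\<in>M. p e \<in> {1, k}"
    using assms(5,6) unfolding payment_equilibrium_1k_def is_allocation_def by auto
  have fin: "finite (X i)" using sub assms(3) finite_subset by blast
  obtain e where e: "e \<in> X i" and he: "pay p (X i - {e}) > (2 - 1/k) * pay p (X j)"
    using assms(10) unfolding pEFX_def by force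
  obtain e' where e': "e' \<in> X i" and he': "pay p (X i - {e'}) \<le> pay p (X j)"
    using assms(9) e unfolding pEF1_def by blast
  have d1: "pay p (X i - {e}) = pay p (X i) - p e"
    unfolding pay_def using fin e by (simp add: sum_diff1)
  have d2: "pay p (X i - {e'}) = pay p (X i) - p e'"
    unfolding pay_def using fin e' by (simp add: sum_diff1)
  define P where "P = pay p (X j)"
  have Pk: "P \<ge> k" using H P_def by simp
  have key: "p e' - p e > (1 - 1/k) * P"
    using he he' d1 d2 P_def by (simp add: algebra_simps)
  have pos: "(1 - 1/k) * P \<ge> (1 - 1/k) * k"
    using Pk assms(1) by (intro mult_left_mono) (auto simp: field_simps)
  have "(1 - 1/k) * k = k - 1" using assms(1) by (simp add: field_simps)
  moreover have "p e \<in> {1,k}" "p e' \<in> {1,k}" using pv sub e e' by auto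
  ultimately show False using key pos assms(1) by auto
qed

end
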